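(* Let $N$ be a sub-sound tWF net, $M$ a sub-sound pWF net whose node set is disjoint from that of $N$, and $p$ a place of $N$. Then the tWF net $N\otimes_p M$ is sub-sound.
   Context: Petri nets and markings. A Petri net is a triple $(P,T,F)$ with $P$ a finite set of places, $T$ a finite set of transitions, $P\cap T=\emptyset$, and $F\subseteq (P\times T)\cup(T\times P)$. For a node $x$, $\bullet x=\{y\mid (y,x)\in F\}$, $x\bullet=\{y\mid (x,y)\in F\}$. A marking is a multiset over $P$ (a function $P\to\mathbb N$); sets of places are identified with bags of multiplicity one, $+,-,\le$ are pointwise, and $k.m$ is the sum of $k$ copies of $m$. Transition $t$ is enabled at $m$ iff $\bullet t\le m$, firing gives $m-\bullet t+t\bullet$, and $m\xrightarrow{*}m'$ denotes reachability by a finite (possibly empty) firing sequence. Workflow nets. A pWF net is $(P,T,F,I,O)$ with $(P,T,F)$ a Petri net, $I,O\subseteq P$ non-empty, every node reachable by a directed path from some node of $I$, and some node of $O$ reachable from every node. A tWF net is the same with $I,O$ non-empty subsets of $T$. Input nodes may have incoming edges and output nodes outgoing edges. The place-completion $\mathrm{pc}(N)$ of a tWF net $N=(P,T,F,I,O)$ is obtained by adding two fresh places $p_i,p_o$ with edges $(p_i,t)$ for all $t\in I$ and $(t,p_o)$ for all $t\in O$, and taking input set $\{p_i\}$ and output set $\{p_o\}$. Sub-soundness. A pWF net is sub-sound if for all integers $k\ge k'\ge 0$ and every marking $m'$: if $k.I\xrightarrow{*}m'+k'.O$ then $m'\xrightarrow{*}(k-k').O$. A tWF net is sub-sound iff its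 place-completion is. Place substitution. For a WF net $N=(P,T,F,I,O)$ and a pWF net $M=(P',T',F',I',O')$ with disjoint node sets and $p\in P$, $N\otimes_p M$ is obtained from $N$ by deleting $p$ and all edges incident to $p$, adding all nodes and edges of $M$, adding an edge $(t,p')$ for each $t\in\bullet_N p$ and $p'\in I'$, and an edge $(p',t)$ for each $p'\in O'$ and $t\in p\bullet_N$; its input set is $(I\setminus\{p\})\cup I'$ if $p\in I$ and $I$ otherwise, and its output set is $(O\setminus\{p\})\cup O'$ if $p\in O$ and $O$ otherwise. *)

theory Defs
  imports Main "HOL-Library.Multiset"
begin

record 'a wfnet =
  places :: "'a set"
  trans  :: "'a set"
  flow   :: "('a \<times> 'a) set"
  inp    :: "'a set"
  outp   :: "'a set"

definition pre :: "('a \<times> 'a) set \<Rightarrow> 'a \<Rightarrow> 'a set" where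
  "pre F x = {y. (y, x) \<in> F}"

definition post :: "('a \<times> 'a) set \<Rightarrow> 'a \<Rightarrow> 'a set" where
  "post F x = {y. (x, y) \<in> F}"

definition petri_net :: "('a, 'b) wfnet_scheme \<Rightarrow> bool" where
  "petri_net N \<longleftrightarrow> finite (places N) \<and> finite (trans N) \<and>
     places N \<inter> trans N = {} \<and>
     flow N \<subseteq> (places N \<times> trans N) \<union> (trans N \<times> places N)"

text \<open>Markings are multisets of places; a set of places is the bag of multiplicity one.\<close>
definition enabled :: "('a, 'b) wfnet_scheme \<Rightarrow> 'a multiset \<Rightarrow> 'a \<Rightarrow> bool" where
  "enabled N m t \<longleftrightarrow> mset_set (pre (flow N) t) \<subseteq># m"

definition fire :: "('a, 'b) wfnet_scheme \<Rightarrow> 'a multiset \<Rightarrow> 'a \<Rightarrow> 'a multiset" where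
  "fire N m t = m - mset_set (pre (flow N) t) + mset_set (post (flow N) t)"

definition step :: "('a, 'b) wfnet_scheme \<Rightarrow> 'a multiset \<Rightarrow> 'a multiset \<Rightarrow> bool" where
  "step N m m' \<longleftrightarrow> (\<exists>t \<in> trans N. enabled N m t \<and> m' = fire N m t)"

definition reach :: "('a, 'b) wfnet_scheme \<Rightarrow> 'a multiset \<Rightarrow> 'a multiset \<Rightarrow> bool" where
  "reach N = (step N)\<^sup>*\<^sup>*"

definition wf_connected :: "('a, 'b) wfnet_scheme \<Rightarrow> bool" where
  "wf_connected N \<longleftrightarrow>
     (\<forall>x \<in> places N \<union> trans N. \<exists>i \<in> inp N. (i, x) \<in> (flow N)\<^sup>*) \<and>
     (\<forall>x \<in> places N \<union> trans N. \<exists>q \<in> outp N. (x, q) \<in> (flow N)\<^sup>*)"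

definition pWF :: "('a, 'b) wfnet_scheme \<Rightarrow> bool" where
  "pWF N \<longleftrightarrow> petri_net N \<and> inp N \<noteq> {} \<and> outp N \<noteq> {} \<and>
     inp N \<subseteq> places N \<and> outp N \<subseteq> places N \<and> wf_connected N"

definition tWF :: "('a, 'b) wfnet_scheme \<Rightarrow> bool" where
  "tWF N \<longleftrightarrow> petri_net N \<and> inp N \<noteq> {} \<and> outp N \<noteq> {} \<and>
     inp N \<subseteq> trans N \<and> outp N \<subseteq> trans N \<and> wf_connected N"

definition sub_sound_p :: "('a, 'b) wfnet_scheme \<Rightarrow> bool" where
  "sub_sound_p N \<longleftrightarrow>
     (\<forall>(k::nat) (k'::nat) (m'::'a multiset).
        k' \<le> k \<longrightarrow> set_mset m' \<subseteq> places N \<longrightarrow>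
        reach N (repeat_mset k (mset_set (inp N))) (m' + repeat_mset k' (mset_set (outp N))) \<longrightarrow>
        reach N m' (repeat_mset (k - k') (mset_set (outp N))))"

text \<open>Place completion: the original nodes are tagged Inl, the fresh places
  p_i = Inr True and p_o = Inr False.\<close>
definition pc :: "('a, 'b) wfnet_scheme \<Rightarrow> ('a + bool) wfnet" where
  "pc N = \<lparr> places = Inl ` places N \<union> {Inr True, Inr False},
            trans = Inl ` trans N,
            flow = map_prod Inl Inl ` flow N
                   \<union> {(Inr True, Inl t) | t. t \<in> inp N}
                   \<union> {(Inl t, Inr False) | t. t \<in> outp N},
            inp = {Inr True},
            outp = {Inr False} \<rparr>"

definition sub_sound_t :: "('a, 'b) wfnet_scheme \<Rightarrow> bool" where
  "sub_sound_t N \<longleftrightarrow> sub_sound_p (pc N)"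

definition subst_place :: "('a, 'b) wfnet_scheme \<Rightarrow> 'a \<Rightarrow> ('a, 'c) wfnet_scheme \<Rightarrow> 'a wfnet" where
  "subst_place N p M = \<lparr>
     places = (places N - {p}) \<union> places M,
     trans = trans N \<union> trans M,
     flow = {e \<in> flow N. fst e \<noteq> p \<and> snd e \<noteq> p} \<union> flow M
            \<union> {(t, p'). t \<in> pre (flow N) p \<and> p' \<in> inp M}
            \<union> {(p', t). p' \<in> outp M \<and> t \<in> post (flow N) p},
     inp = (if p \<in> inp N then (inp N - {p}) \<union> inp M else inp N),
     outp = (if p \<in> outp N then (outp N - {p}) \<union> outp M else outp N) \<rparr>"

end

theory Submission
  imports Defs
begin

lemma reach_refl: "reach N m m" by (simp add: reach_def)
lemma reach_trans: "reach N x y \<Longrightarrow> reach N y z \<Longrightarrow> reach N x z"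
  unfolding reach_def by (rule rtranclp_trans)
lemma reach_step: "step N x y \<Longrightarrow> reach N x y"
  unfolding reach_def by blast

lemma step_mono: "step N x y \<Longrightarrow> step N (x + c) (y + c)"
proof -
  assume "step N x y"
  then obtain t where t: "t \<in> trans N" "mset_set (pre (flow N) t) \<subseteq># x"
    "y = x - mset_set (pre (flow N) t) + mset_set (post (flow N) t)"
    unfolding step_def enabled_def fire_def by blast
  have "mset_set (pre (flow N) t) \<subseteq># x + c" using t(2) by (meson mset_subset_eq_add_left subset_mset.order_trans)
  moreover have "y + c = x + c - mset_set (pre (flow N) t) + mset_set (post (flow N) t)"
    using t(2,3) by (metis add.assoc add.commute multiset_diff_union_assoc)
  ultimately show ?thesis using t(1) unfolding step_def enabled_def fire_def by blast
qed

lemma reach_mono: "reach N x y \<Longrightarrow> reach N (x + c) (y + c)"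
  unfolding reach_def
proof (induction rule: rtranclp_induct)
  case base then show ?case by simp
next
  case (step y z) then show ?case using step_mono[of N y z c] by (meson rtranclp.rtrancl_into_rtrancl)
qed

lemma step_lift:
  assumes H: "\<And>t. t \<in> trans A \<Longrightarrow> \<exists>t'\<in>trans B. mset_set (pre (flow B) t') = image_mset f (mset_set (pre (flow A) t)) \<and> mset_set (post (flow B) t') = image_mset f (mset_set (post (flow A) t))"
  and S: "step A x y"
  shows "step B (image_mset f x) (image_mset f y)"
proof -
  obtain t where t: "t \<in> trans A" "mset_set (pre (flow A) t) \<subseteq># x"
    "y = x - mset_set (pre (flow A) t) + mset_set (post (flow A) t)"
    using S unfolding step_def enabled_def fire_def by blast
  obtain t' where t': "t'\<in>trans B" "mset_set (pre (flow B) t') = image_mset f (mset_set (pre (flow A) t))"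
     "mset_set (post (flow B) t') = image_mset f (mset_set (post (flow A) t))" using H t(1) by blast
  have "mset_set (pre (flow B) t') \<subseteq># image_mset f x" using t(2) t'(2) by (simp add: image_mset_subseteq_mono)
  moreover have "image_mset f y = image_mset f x - mset_set (pre (flow B) t') + mset_set (post (flow B) t')"
    using t(2,3) t' by (metis image_mset_Diff image_mset_union)
  ultimately show ?thesis using t'(1) unfolding step_def enabled_def fire_def by blast
qed

lemma reach_lift:
  assumes H: "\<And>t. t \<in> trans A \<Longrightarrow> \<exists>t'\<in>trans B. mset_set (pre (flow B) t') = image_mset f (mset_set (pre (flow A) t)) \<and> mset_set (post (flow B) t') = image_mset f (mset_set (post (flow A) t))"
  and S: "reach A x y"
  shows "reach B (image_mset f x + c) (image_mset f y + c)"
proof -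
  have "reach B (image_mset f x) (image_mset f y)"
    using S unfolding reach_def
  proof (induction rule: rtranclp_induct)
    case base then show ?case by simp
  next
    case (step y z) then show ?case using step_lift[OF H, of y z] by (meson rtranclp.rtrancl_into_rtrancl)
  qed
  then show ?thesis by (rule reach_mono)
qed

lemma reach_nonempty:
  assumes H: "\<And>t. t \<in> trans N \<Longrightarrow> mset_set (post (flow N) t) \<noteq> {#}"
  and S: "reach N x y" and x: "x \<noteq> {#}" shows "y \<noteq> {#}"
  using S x unfolding reach_def
proof (induction rule: rtranclp_induct)
  case base then show ?case by simp
next
  case (step y z)
  then obtain t where "t \<in> trans N" "z = y - mset_set (pre (flow N) t) + mset_set (post (flow N) t)"
    unfolding step_def fire_def by blast
  then show ?case using H by simp
qed

lemma pc_pre: "pre (flow (pc N)) (Inl t) = Inl ` pre (flow N) t \<union> (if t \<in> inp N then {Inr True} else {})"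
  by (auto simp: pc_def pre_def)
lemma pc_post: "post (flow (pc N)) (Inl t) = Inl ` post (flow N) t \<union> (if t \<in> outp N then {Inr False} else {})"
  by (auto simp: pc_def post_def)
lemma pc_trans: "trans (pc N) = Inl ` trans N" by (simp add: pc_def)
lemma pc_places: "places (pc N) = Inl ` places N \<union> {Inr True, Inr False}" by (simp add: pc_def)
lemma pc_io: "inp (pc N) = {Inr True}" "outp (pc N) = {Inr False}" by (simp_all add: pc_def)

lemma mset_set_Inl: "mset_set (Inl ` A) = image_mset Inl (mset_set A)"
  by (simp add: image_mset_mset_set)

lemma mset_ins_Inr: "finite A \<Longrightarrow> mset_set (insert (Inr b) (Inl ` A)) = add_mset (Inr b) (image_mset Inl (mset_set A))"
proof -
  assume f: "finite A"
  have "Inr b \<notin> Inl ` A" by auto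
  then show ?thesis using f by (simp add: mset_set.insert mset_set_Inl)
qed

lemma mset_pc_pre:
  assumes "finite (pre (flow N) t)"
  shows "mset_set (pre (flow (pc N)) (Inl t)) = image_mset Inl (mset_set (pre (flow N) t)) + (if t \<in> inp N then {#Inr True#} else {#})"
  unfolding pc_pre using assms by (auto simp: mset_set_Inl mset_ins_Inr)
lemma mset_pc_post:
  assumes "finite (post (flow N) t)"
  shows "mset_set (post (flow (pc N)) (Inl t)) = image_mset Inl (mset_set (post (flow N) t)) + (if t \<in> outp N then {#Inr False#} else {#})"
  unfolding pc_post using assms by (auto simp: mset_set_Inl mset_ins_Inr)

locale ctx =
  fixes N M :: "'a wfnet" and p :: 'a
  assumes tN: "tWF N" and sN: "sub_sound_t N" and pM: "pWF M" and sM: "sub_sound_p M"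
    and disj: "(places N \<union> trans N) \<inter> (places M \<union> trans M) = {}"
    and pP: "p \<in> places N"
begin

abbreviation "R \<equiv> subst_place N p M"

lemma pnN: "finite (places N)" "finite (trans N)" "places N \<inter> trans N = {}"
  "flow N \<subseteq> (places N \<times> trans N) \<union> (trans N \<times> places N)"
  using tN by (auto simp: tWF_def petri_net_def)
lemma pnM: "finite (places M)" "finite (trans M)" "places M \<inter> trans M = {}"
  "flow M \<subseteq> (places M \<times> trans M) \<union> (trans M \<times> places M)"
  using pM by (auto simp: pWF_def petri_net_def)
lemma ioN: "inp N \<subseteq> trans N" "outp N \<subseteq> trans N" "inp N \<noteq> {}" "outp N \<noteq> {}" "wf_connected N"
  using tN by (auto simp: tWF_def)
lemma ioM: "inp M \<subseteq> places M" "outp M \<subseteq> places M" "inp M \<noteq> {}" "outp M \<noteq> {}" "wf_connected M"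
  using pM by (auto simp: pWF_def)
lemma finio: "finite (inp M)" "finite (outp M)"
  using finite_subset[OF ioM(1) pnM(1)] finite_subset[OF ioM(2) pnM(1)] by auto

lemma pfacts: "p \<notin> trans N" "p \<notin> inp N" "p \<notin> outp N" "p \<notin> places M" "p \<notin> trans M"
  using pP pnN ioN disj by auto

lemma preN_sub: "pre (flow N) t \<subseteq> places N \<union> trans N" "post (flow N) t \<subseteq> places N \<union> trans N"
  using pnN(4) by (auto simp: pre_def post_def)
lemma preN_tr: "t \<in> trans N \<Longrightarrow> pre (flow N) t \<subseteq> places N" "t \<in> trans N \<Longrightarrow> post (flow N) t \<subseteq> places N"
  using pnN(3,4) by (auto simp: pre_def post_def)
lemma preM_tr: "t \<in> trans M \<Longrightarrow> pre (flow M) t \<subseteq> places M" "t \<in> trans M \<Longrightarrow> post (flow M) t \<subseteq> places M"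
  using pnM(3,4) by (auto simp: pre_def post_def)
lemma preM_sub: "pre (flow M) t \<subseteq> places M \<union> trans M" "post (flow M) t \<subseteq> places M \<union> trans M"
  using pnM(4) by (auto simp: pre_def post_def)
lemma finpre: "finite (pre (flow N) t)" "finite (post (flow N) t)" "finite (pre (flow M) t)" "finite (post (flow M) t)"
  using finite_subset[OF preN_sub(1)] finite_subset[OF preN_sub(2)]
   finite_subset[OF preM_sub(1)] finite_subset[OF preM_sub(2)] pnN(1,2) pnM(1,2) by auto

lemma ioR: "inp R = inp N" "outp R = outp N" by (simp_all add: subst_place_def pfacts)
lemma transR: "trans R = trans N \<union> trans M" by (simp add: subst_place_def)
lemma placesR: "places R = (places N - {p}) \<union> places M" by (simp add: subst_place_def)

lemma preR_N: "t \<in> trans N \<Longrightarrow> pre (flow R) t = (pre (flow N) t - {p}) \<union> (if p \<in> pre (flow N) t then outp M else {})"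
  using pnM(4) disj ioM(1,2) pfacts unfolding subst_place_def pre_def post_def by auto
lemma postR_N: "t \<in> trans N \<Longrightarrow> post (flow R) t = (post (flow N) t - {p}) \<union> (if p \<in> post (flow N) t then inp M else {})"
  using pnM(4) disj ioM(1,2) pfacts unfolding subst_place_def pre_def post_def by auto
lemma preR_M: "t \<in> trans M \<Longrightarrow> pre (flow R) t = pre (flow M) t"
  using pnN(4) pnM(3,4) disj ioM(1,2) pfacts preN_sub unfolding subst_place_def pre_def post_def by auto
lemma postR_M: "t \<in> trans M \<Longrightarrow> post (flow R) t = post (flow M) t"
  using pnN(4) pnM(3,4) disj ioM(1,2) pfacts preN_sub unfolding subst_place_def pre_def post_def by auto

lemma finR: "finite (pre (flow R) t)" "finite (post (flow R) t)"
proof -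
  have "pre (flow R) t \<subseteq> pre (flow N) t \<union> pre (flow M) t \<union> outp M \<union> inp M \<union> pre (flow N) p"
    unfolding subst_place_def pre_def post_def by auto
  then show "finite (pre (flow R) t)" using finpre finio by (meson finite_UnI finite_subset)
  have "post (flow R) t \<subseteq> post (flow N) t \<union> post (flow M) t \<union> outp M \<union> inp M \<union> post (flow N) p"
    unfolding subst_place_def pre_def post_def by auto
  then show "finite (post (flow R) t)" using finpre finio by (meson finite_UnI finite_subset)
qed

lemma mpreR_N: "t \<in> trans N \<Longrightarrow> mset_set (pre (flow (pc R)) (Inl t)) =
   image_mset Inl (mset_set (pre (flow N) t - {p})) + (if t \<in> inp N then {#Inr True#} else {#})
   + (if p \<in> pre (flow N) t then image_mset Inl (mset_set (outp M)) else {#})"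
proof -
  assume t: "t \<in> trans N"
  have d: "(pre (flow N) t - {p}) \<inter> outp M = {}" using preN_tr[OF t] ioM disj by auto
  have "mset_set (pre (flow R) t) = mset_set (pre (flow N) t - {p}) + (if p \<in> pre (flow N) t then mset_set (outp M) else {#})"
    using preR_N[OF t] mset_set_Union[OF _ finio(2) d] finpre by auto
  then show ?thesis using mset_pc_pre[OF finR(1), of t] ioR by simp
qed

lemma mpostR_N: "t \<in> trans N \<Longrightarrow> mset_set (post (flow (pc R)) (Inl t)) =
   image_mset Inl (mset_set (post (flow N) t - {p})) + (if t \<in> outp N then {#Inr False#} else {#})
   + (if p \<in> post (flow N) t then image_mset Inl (mset_set (inp M)) else {#})"
proof -
  assume t: "t \<in> trans N"
  have d: "(post (flow N) t - {p}) \<inter> inp M = {}" using preN_tr[OF t] ioM disj by auto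
  have "mset_set (post (flow R) t) = mset_set (post (flow N) t - {p}) + (if p \<in> post (flow N) t then mset_set (inp M) else {#})"
    using postR_N[OF t] mset_set_Union[OF _ finio(1) d] finpre by auto
  then show ?thesis using mset_pc_post[OF finR(2), of t] ioR by simp
qed

lemma mpreN: "t \<in> trans N \<Longrightarrow> mset_set (pre (flow (pc N)) (Inl t)) =
   image_mset Inl (mset_set (pre (flow N) t - {p})) + (if t \<in> inp N then {#Inr True#} else {#})
   + (if p \<in> pre (flow N) t then {#Inl p#} else {#})"
  using mset_pc_pre[OF finpre(1)[of t]] mset_set.remove[OF finpre(1)[of t], of p] by auto

lemma mpostN: "t \<in> trans N \<Longrightarrow> mset_set (post (flow (pc N)) (Inl t)) =
   image_mset Inl (mset_set (post (flow N) t - {p})) + (if t \<in> outp N then {#Inr False#} else {#})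
   + (if p \<in> post (flow N) t then {#Inl p#} else {#})"
  using mset_pc_post[OF finpre(2)[of t]] mset_set.remove[OF finpre(2)[of t], of p] by auto

lemma mpreR_M: "t \<in> trans M \<Longrightarrow> mset_set (pre (flow (pc R)) (Inl t)) = image_mset Inl (mset_set (pre (flow M) t))"
  using mset_pc_pre[OF finR(1), of t] ioR preR_M disj ioN by auto
lemma mpostR_M: "t \<in> trans M \<Longrightarrow> mset_set (post (flow (pc R)) (Inl t)) = image_mset Inl (mset_set (post (flow M) t))"
  using mset_pc_post[OF finR(2), of t] ioR postR_M disj ioN by auto

lemma transpcR: "trans (pc R) = Inl ` (trans N \<union> trans M)" by (simp add: pc_trans transR)

lemma postM_ne: "t \<in> trans M \<Longrightarrow> mset_set (post (flow M) t) \<noteq> {#}"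
proof -
  assume t: "t \<in> trans M"
  obtain q where q: "q \<in> outp M" "(t, q) \<in> (flow M)\<^sup>*" using ioM(5) t unfolding wf_connected_def by blast
  have "t \<noteq> q" using q(1) ioM(2) pnM(3) t by auto
  then obtain y where "(t, y) \<in> flow M" using q(2) by (metis converse_rtranclE)
  then have "post (flow M) t \<noteq> {}" by (auto simp: post_def)
  then show ?thesis using finpre(4)[of t] by (simp add: mset_set_empty_iff)
qed

lemma reachM_empty: "reach M x {#} \<Longrightarrow> x = {#}"
  using reach_nonempty[of M x "{#}"] postM_ne by blast

lemma setmset_mset_set: "set_mset (mset_set A) \<subseteq> A" by (cases "finite A") auto

lemma Ine: "mset_set (inp M) \<noteq> {#}" "mset_set (outp M) \<noteq> {#}"
  using finio ioM(3,4) by (simp_all add: mset_set_empty_iff)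

lemma sMr: "k' \<le> k \<Longrightarrow> set_mset m' \<subseteq> places M \<Longrightarrow>
   reach M (repeat_mset k (mset_set (inp M))) (m' + repeat_mset k' (mset_set (outp M))) \<Longrightarrow>
   reach M m' (repeat_mset (k - k') (mset_set (outp M)))"
  using sM unfolding sub_sound_p_def by blast

lemma set_repeat: "set_mset (repeat_mset n X) \<subseteq> set_mset X"
  by (induction n) auto

lemma lemL:
  assumes mu: "set_mset \<mu> \<subseteq> places M"
    and r: "reach M (repeat_mset a (mset_set (inp M))) (\<mu> + repeat_mset b (mset_set (outp M)))"
  shows "b \<le> a \<and> (\<mu> \<noteq> {#} \<longrightarrow> b < a)"
proof (rule ccontr)
  assume c: "\<not> (b \<le> a \<and> (\<mu> \<noteq> {#} \<longrightarrow> b < a))"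
  then have ab: "a \<le> b" by auto
  define m' where "m' = \<mu> + repeat_mset (b - a) (mset_set (outp M))"
  have "repeat_mset b (mset_set (outp M)) = repeat_mset (b - a) (mset_set (outp M)) + repeat_mset a (mset_set (outp M))"
    using ab by (metis le_add_diff_inverse2 repeat_mset_distrib)
  then have r2: "reach M (repeat_mset a (mset_set (inp M))) (m' + repeat_mset a (mset_set (outp M)))"
    using r unfolding m'_def by (metis add.assoc)
  have "set_mset m' \<subseteq> places M"
    using mu set_repeat[of "b-a" "mset_set (outp M)"] setmset_mset_set[of "outp M"] ioM(2) unfolding m'_def set_mset_union by blast
  then have "reach M m' (repeat_mset (a - a) (mset_set (outp M)))" using sMr[OF le_refl _ r2] by blast
  then have "m' = {#}" using reachM_empty[of m'] by (metis diff_self_eq_0 repeat_mset_0)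
  then have e: "\<mu> = {#}" "repeat_mset (b - a) (mset_set (outp M)) = {#}" unfolding m'_def by simp_all
  then have "b - a = 0" using Ine(2) repeat_mset_eq_empty_iff by blast
  then show False using c ab e(1) by auto
qed

lemma IO: "reach M (mset_set (inp M)) (mset_set (outp M))"
proof -
  have a: "set_mset (mset_set (inp M)) \<subseteq> places M" using setmset_mset_set[of "inp M"] ioM(1) by (rule subset_trans)
  have b: "reach M (repeat_mset 1 (mset_set (inp M))) (mset_set (inp M) + repeat_mset 0 (mset_set (outp M)))"
    by (simp add: reach_refl)
  have "reach M (mset_set (inp M)) (repeat_mset (1 - 0) (mset_set (outp M)))" using sMr[of 0 1 "mset_set (inp M)", OF _ a b] by simp
  then show ?thesis by simp
qed


definition nu :: "('a + bool) multiset \<Rightarrow> ('a + bool) multiset" where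
  "nu m = filter_mset (\<lambda>x. x \<notin> Inl ` places M) m"
definition mu :: "('a + bool) multiset \<Rightarrow> 'a multiset" where
  "mu m = image_mset projl (filter_mset (\<lambda>x. x \<in> Inl ` places M) m)"

lemma nu_add[simp]: "nu (x + y) = nu x + nu y" by (simp add: nu_def)
lemma mu_add[simp]: "mu (x + y) = mu x + mu y" by (simp add: mu_def)
lemma nu_diff: "nu (x - y) = nu x - nu y" by (simp add: nu_def)
lemma mu_diff: "y \<subseteq># x \<Longrightarrow> mu (x - y) = mu x - mu y"
  unfolding mu_def by (simp add: image_mset_Diff multiset_filter_mono)
lemma nu_mono: "y \<subseteq># x \<Longrightarrow> nu y \<subseteq># nu x" unfolding nu_def by (simp add: multiset_filter_mono)
lemma mu_mono: "y \<subseteq># x \<Longrightarrow> mu y \<subseteq># mu x" unfolding mu_def by (simp add: multiset_filter_mono image_mset_subseteq_mono)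
lemma decomp: "m = nu m + image_mset Inl (mu m)"
proof -
  have "image_mset Inl (mu m) = image_mset (Inl \<circ> projl) (filter_mset (\<lambda>x. x \<in> Inl ` places M) m)"
    by (simp add: mu_def multiset.map_comp)
  also have "\<dots> = filter_mset (\<lambda>x. x \<in> Inl ` places M) m"
    by (rule multiset.map_ident_strong) auto
  finally have "image_mset Inl (mu m) = filter_mset (\<lambda>x. x \<in> Inl ` places M) m" .
  then show ?thesis unfolding nu_def by (metis add.commute multiset_partition)
qed
lemma mu_set: "set_mset (mu m) \<subseteq> places M" unfolding mu_def by auto
lemma nu_Inl: "nu (image_mset Inl X) = image_mset Inl (filter_mset (\<lambda>x. x \<notin> places M) X)"
  unfolding nu_def by (simp add: filter_mset_image_mset inj_image_mem_iff[OF inj_Inl])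
lemma mu_Inl: "mu (image_mset Inl X) = filter_mset (\<lambda>x. x \<in> places M) X"
  unfolding mu_def by (simp add: filter_mset_image_mset inj_image_mem_iff[OF inj_Inl] multiset.map_comp o_def)
lemma nu_Inr[simp]: "nu (replicate_mset n (Inr b)) = replicate_mset n (Inr b)"
  unfolding nu_def by (induction n) auto
lemma mu_Inr[simp]: "mu (replicate_mset n (Inr b)) = {#}"
  unfolding mu_def by (induction n) auto
lemma nu_Inr1[simp]: "nu {#Inr b#} = {#Inr b#}" unfolding nu_def by auto
lemma mu_Inr1[simp]: "mu {#Inr b#} = {#}" unfolding mu_def by auto

lemma nu_msetM: "A \<subseteq> places M \<Longrightarrow> nu (image_mset Inl (mset_set A)) = {#}"
proof -
  assume "A \<subseteq> places M"
  then have e: "{x \<in> A. x \<notin> places M} = {}" by auto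
  show ?thesis
  proof (cases "finite A")
    case True
    show ?thesis unfolding nu_Inl filter_mset_mset_set[OF True] e by simp
  qed (simp add: nu_def mu_def)
qed
lemma mu_msetM: "A \<subseteq> places M \<Longrightarrow> mu (image_mset Inl (mset_set A)) = mset_set A"
proof -
  assume "A \<subseteq> places M"
  then have "{x \<in> A. x \<in> places M} = A" by auto
  then show ?thesis unfolding mu_Inl by (cases "finite A") (auto simp: filter_mset_mset_set)
qed
lemma nu_msetN: "A \<inter> places M = {} \<Longrightarrow> nu (image_mset Inl (mset_set A)) = image_mset Inl (mset_set A)"
proof -
  assume "A \<inter> places M = {}"
  then have "{x \<in> A. x \<notin> places M} = A" by auto
  then show ?thesis unfolding nu_Inl by (cases "finite A") (auto simp: filter_mset_mset_set)
qed
lemma mu_msetN: "A \<inter> places M = {} \<Longrightarrow> mu (image_mset Inl (mset_set A)) = {#}"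
proof -
  assume "A \<inter> places M = {}"
  then have e: "{x \<in> A. x \<in> places M} = {}" by auto
  show ?thesis
  proof (cases "finite A")
    case True
    show ?thesis unfolding mu_Inl filter_mset_mset_set[OF True] e by simp
  qed (simp add: nu_def mu_def)
qed


lemma nu_empty[simp]: "nu {#} = {#}" by (simp add: nu_def)
lemma mu_empty[simp]: "mu {#} = {#}" by (simp add: mu_def)
lemma mu_rep[simp]: "mu (repeat_mset n X) = repeat_mset n (mu X)" by (induction n) auto
lemma nu_rep[simp]: "nu (repeat_mset n X) = repeat_mset n (nu X)" by (induction n) auto
lemma rep_plus: "replicate_mset (a + b) x = replicate_mset a x + replicate_mset b x"
  by (simp add: multiset_eq_iff)

definition cc :: "'a \<Rightarrow> nat" where "cc t = (if p \<in> pre (flow N) t then 1 else 0)"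
definition dd :: "'a \<Rightarrow> nat" where "dd t = (if p \<in> post (flow N) t then 1 else 0)"
definition XP :: "'a \<Rightarrow> ('a + bool) multiset" where
  "XP t = image_mset Inl (mset_set (pre (flow N) t - {p})) + (if t \<in> inp N then {#Inr True#} else {#})"
definition YP :: "'a \<Rightarrow> ('a + bool) multiset" where
  "YP t = image_mset Inl (mset_set (post (flow N) t - {p})) + (if t \<in> outp N then {#Inr False#} else {#})"

lemma ifrep: "(if P then X else {#}) = repeat_mset (if P then 1 else 0) X" by simp
lemma ifrep1: "(if P then {#x#} else {#}) = replicate_mset (if P then 1 else 0) x" by simp

lemma mpreR_N': "t \<in> trans N \<Longrightarrow> mset_set (pre (flow (pc R)) (Inl t)) = XP t + repeat_mset (cc t) (image_mset Inl (mset_set (outp M)))"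
  unfolding XP_def cc_def by (simp only: mpreR_N ifrep)
lemma mpostR_N': "t \<in> trans N \<Longrightarrow> mset_set (post (flow (pc R)) (Inl t)) = YP t + repeat_mset (dd t) (image_mset Inl (mset_set (inp M)))"
  unfolding YP_def dd_def by (simp only: mpostR_N ifrep)
lemma mpreN': "t \<in> trans N \<Longrightarrow> mset_set (pre (flow (pc N)) (Inl t)) = XP t + replicate_mset (cc t) (Inl p)"
  unfolding XP_def cc_def by (simp only: mpreN ifrep1)
lemma mpostN': "t \<in> trans N \<Longrightarrow> mset_set (post (flow (pc N)) (Inl t)) = YP t + replicate_mset (dd t) (Inl p)"
  unfolding YP_def dd_def by (simp only: mpostN ifrep1)

lemma nuXP: "t \<in> trans N \<Longrightarrow> nu (XP t) = XP t" "t \<in> trans N \<Longrightarrow> mu (XP t) = {#}"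
  "t \<in> trans N \<Longrightarrow> nu (YP t) = YP t" "t \<in> trans N \<Longrightarrow> mu (YP t) = {#}"
proof -
  assume t: "t \<in> trans N"
  have "(pre (flow N) t - {p}) \<inter> places M = {}" "(post (flow N) t - {p}) \<inter> places M = {}"
    using preN_tr[OF t] disj by auto
  then show "nu (XP t) = XP t" "mu (XP t) = {#}" "nu (YP t) = YP t" "mu (YP t) = {#}"
    unfolding XP_def YP_def by (simp_all add: nu_msetN mu_msetN)
qed

lemma nuO: "nu (image_mset Inl (mset_set (outp M))) = {#}" "mu (image_mset Inl (mset_set (outp M))) = mset_set (outp M)"
  "nu (image_mset Inl (mset_set (inp M))) = {#}" "mu (image_mset Inl (mset_set (inp M))) = mset_set (inp M)"
  using ioM(1,2) by (simp_all add: nu_msetM mu_msetM)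

lemma cc_le: "cc t \<le> 1" unfolding cc_def by simp

lemma cc_pos: "0 < cc t \<Longrightarrow> repeat_mset (cc t) X = X" unfolding cc_def by (simp split: if_splits)


lemma inv_step_M:
  assumes t: "t \<in> trans M" and en: "mset_set (pre (flow (pc R)) (Inl t)) \<subseteq># m"
    and m2: "m2 = m - mset_set (pre (flow (pc R)) (Inl t)) + mset_set (post (flow (pc R)) (Inl t))"
    and H1: "reach M A (mu m + B)"
  shows "reach M A (mu m2 + B) \<and> nu m2 = nu m"
proof -
  define PM where "PM = mset_set (pre (flow M) t)"
  define QM where "QM = mset_set (post (flow M) t)"
  obtain W where W: "m = image_mset Inl PM + W" using en mpreR_M[OF t] unfolding PM_def
    by (metis mset_subset_eq_exists_conv)
  have m2': "m2 = W + image_mset Inl QM" using m2 W mpreR_M[OF t] mpostR_M[OF t] unfolding PM_def QM_def by simp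
  have muP: "mu (image_mset Inl PM) = PM" "nu (image_mset Inl PM) = {#}"
    "mu (image_mset Inl QM) = QM" "nu (image_mset Inl QM) = {#}"
    unfolding PM_def QM_def using preM_tr[OF t] by (simp_all add: mu_msetM nu_msetM)
  have "step M (PM + mu W + B) (mu W + QM + B)"
    unfolding step_def enabled_def fire_def using t unfolding PM_def QM_def
    by (intro bexI[of _ t]) (auto simp: add.assoc add.commute add.left_commute)
  then have "reach M (mu m + B) (mu m2 + B)" using W m2' muP by (simp add: reach_step add.assoc)
  then show ?thesis using H1 W m2' muP by (simp add: reach_trans[OF H1])
qed


lemma inv_step_N:
  assumes t: "t \<in> trans N" and en: "mset_set (pre (flow (pc R)) (Inl t)) \<subseteq># m"
    and m2: "m2 = m - mset_set (pre (flow (pc R)) (Inl t)) + mset_set (post (flow (pc R)) (Inl t))"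
    and H1: "reach M (repeat_mset a (mset_set (inp M))) (mu m + repeat_mset b (mset_set (outp M)))"
    and H3: "reach (pc N) S (nu m + replicate_mset (a - b) (Inl p))" and H2: "b \<le> a"
  shows "reach M (repeat_mset (a + dd t) (mset_set (inp M))) (mu m2 + repeat_mset (b + cc t) (mset_set (outp M)))
     \<and> b + cc t \<le> a + dd t
     \<and> reach (pc N) S (nu m2 + replicate_mset ((a + dd t) - (b + cc t)) (Inl p))"
proof -
  define I' where "I' = mset_set (inp M)"
  define O' where "O' = mset_set (outp M)"
  obtain W where W: "m = XP t + repeat_mset (cc t) (image_mset Inl O') + W" using en mpreR_N'[OF t] unfolding O'_def
    by (metis mset_subset_eq_exists_conv)
  have m2': "m2 = W + (YP t + repeat_mset (dd t) (image_mset Inl I'))"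
    using m2 W mpreR_N'[OF t] mpostR_N'[OF t] unfolding O'_def I'_def by (simp only: add_diff_cancel_left')
  have mum: "mu m = repeat_mset (cc t) O' + mu W" "nu m = XP t + nu W"
    unfolding W O'_def by (simp_all only: nuXP[OF t] nuO mu_add nu_add mu_rep nu_rep repeat_mset_empty add_0 add_0_right)
  have mum2: "mu m2 = mu W + repeat_mset (dd t) I'" "nu m2 = nu W + YP t"
    unfolding m2' I'_def by (simp_all only: nuXP[OF t] nuO mu_add nu_add mu_rep nu_rep repeat_mset_empty add_0 add_0_right)
  have H1a: "reach M (repeat_mset a I' + repeat_mset (dd t) I') (mu m + repeat_mset b O' + repeat_mset (dd t) I')"
    using reach_mono[OF H1] unfolding I'_def O'_def by blast
  have eq1: "mu m + repeat_mset b O' + repeat_mset (dd t) I' = mu m2 + repeat_mset (b + cc t) O'"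
    unfolding mum mum2 repeat_mset_distrib by (simp add: ac_simps)
  have H1': "reach M (repeat_mset (a + dd t) I') (mu m2 + repeat_mset (b + cc t) O')"
    using H1a unfolding eq1 repeat_mset_distrib .
  have L2: "b + cc t \<le> a + dd t" using lemL[OF mu_set H1'[unfolded I'_def O'_def]] by simp
  have ce: "cc t \<le> a - b"
  proof (cases "cc t = 0")
    case False
    then have "cc t = 1" using cc_le[of t] by simp
    then have "mu m \<noteq> {#}" using mum Ine(2) unfolding O'_def by simp
    then have "b < a" using lemL[OF mu_set H1] by simp
    then show ?thesis using \<open>cc t = 1\<close> by simp
  qed simp
  then obtain e where e: "a - b = cc t + e" using le_Suc_ex by blast
  have ar: "(a + dd t) - (b + cc t) = e + dd t" using e ce L2 H2 by linarith
  have st: "step (pc N) (XP t + nu W + replicate_mset (cc t + e) (Inl p)) (nu W + YP t + replicate_mset (e + dd t) (Inl p))"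
    unfolding step_def enabled_def fire_def
  proof (intro bexI[of _ "Inl t"] conjI)
    show "Inl t \<in> trans (pc N)" using t by (simp add: pc_trans)
    show "mset_set (pre (flow (pc N)) (Inl t)) \<subseteq># XP t + nu W + replicate_mset (cc t + e) (Inl p)"
      unfolding mpreN'[OF t] rep_plus by (simp add: ac_simps)
    show "nu W + YP t + replicate_mset (e + dd t) (Inl p) =
      XP t + nu W + replicate_mset (cc t + e) (Inl p) - mset_set (pre (flow (pc N)) (Inl t)) + mset_set (post (flow (pc N)) (Inl t))"
      unfolding mpreN'[OF t] mpostN'[OF t] rep_plus by (simp add: ac_simps)
  qed
  have "reach (pc N) S (nu m2 + replicate_mset ((a + dd t) - (b + cc t)) (Inl p))"
    using reach_trans[OF H3[unfolded mum e] reach_step[OF st]] unfolding mum2 ar .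
  then show ?thesis using H1' L2 unfolding I'_def O'_def by blast
qed


lemma inv:
  assumes "reach (pc R) (replicate_mset k (Inr True)) m"
  shows "\<exists>a b. reach M (repeat_mset a (mset_set (inp M))) (mu m + repeat_mset b (mset_set (outp M))) \<and> b \<le> a
     \<and> reach (pc N) (replicate_mset k (Inr True)) (nu m + replicate_mset (a - b) (Inl p))"
proof -
  have "(step (pc R))\<^sup>*\<^sup>* (replicate_mset k (Inr True)) m" using assms by (simp add: reach_def)
  then show ?thesis
  proof (induction rule: rtranclp_induct)
    case base
    show ?case by (intro exI[of _ 0]) (simp add: reach_refl)
  next
    case (step m m2)
    obtain a b where IH: "reach M (repeat_mset a (mset_set (inp M))) (mu m + repeat_mset b (mset_set (outp M)))"
      "b \<le> a" "reach (pc N) (replicate_mset k (Inr True)) (nu m + replicate_mset (a - b) (Inl p))"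
      using step.IH by blast
    obtain t' where t': "t' \<in> trans (pc R)" "mset_set (pre (flow (pc R)) t') \<subseteq># m"
      "m2 = m - mset_set (pre (flow (pc R)) t') + mset_set (post (flow (pc R)) t')"
      using step.hyps(2) unfolding step_def enabled_def fire_def by blast
    then obtain t where tt: "t' = Inl t" "t \<in> trans N \<or> t \<in> trans M" unfolding transpcR by blast
    show ?case
    proof (cases "t \<in> trans M")
      case True
      have "reach M (repeat_mset a (mset_set (inp M))) (mu m2 + repeat_mset b (mset_set (outp M))) \<and> nu m2 = nu m"
        using inv_step_M[OF True t'(2,3)[unfolded tt(1)] IH(1)] .
      then show ?thesis using IH(2,3) by metis
    next
      case False
      then have tN': "t \<in> trans N" using tt(2) by blast
      show ?thesis using inv_step_N[OF tN' t'(2,3)[unfolded tt(1)] IH(1) IH(3) IH(2)] by blast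
    qed
  qed
qed

lemma liftM: "reach M x y \<Longrightarrow> reach (pc R) (image_mset Inl x + c) (image_mset Inl y + c)"
proof (rule reach_lift)
  fix t assume t: "t \<in> trans M"
  show "\<exists>t'\<in>trans (pc R). mset_set (pre (flow (pc R)) t') = image_mset Inl (mset_set (pre (flow M) t)) \<and>
      mset_set (post (flow (pc R)) t') = image_mset Inl (mset_set (post (flow M) t))"
    using t mpreR_M mpostR_M transpcR by blast
qed

definition lam :: "('a + bool) multiset \<Rightarrow> ('a + bool) multiset" where
  "lam x = filter_mset (\<lambda>y. y \<noteq> Inl p) x + repeat_mset (count x (Inl p)) (image_mset Inl (mset_set (outp M)))"

lemma filter_all: "(\<forall>x\<in>#X. P x) \<Longrightarrow> filter_mset P X = X" by (induction X) auto

lemma XP_noP: "Inl p \<notin># XP t" "Inl p \<notin># YP t"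
proof -
  have "Inl p \<notin># image_mset Inl (mset_set (pre (flow N) t - {p}))"
       "Inl p \<notin># image_mset Inl (mset_set (post (flow N) t - {p}))"
    using finpre by auto
  then show "Inl p \<notin># XP t" "Inl p \<notin># YP t" unfolding XP_def YP_def by auto
qed

lemma lam_XP: "filter_mset (\<lambda>y. y \<noteq> Inl p) (XP t) = XP t" "count (XP t) (Inl p) = 0"
   "filter_mset (\<lambda>y. y \<noteq> Inl p) (YP t) = YP t" "count (YP t) (Inl p) = 0"
  using XP_noP by (auto intro!: filter_all simp: not_in_iff[symmetric])

lemma sim_step:
  assumes st: "step (pc N) x y" shows "reach (pc R) (lam x) (lam y)"
proof -
  obtain t' where t': "t' \<in> trans (pc N)" "mset_set (pre (flow (pc N)) t') \<subseteq># x"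
      "y = x - mset_set (pre (flow (pc N)) t') + mset_set (post (flow (pc N)) t')"
      using st unfolding step_def enabled_def fire_def by blast
  then obtain t where tt: "t' = Inl t" "t \<in> trans N" unfolding pc_trans by blast
  define IO :: "('a + bool) multiset" where "IO = image_mset Inl (mset_set (outp M))"
  define II :: "('a + bool) multiset" where "II = image_mset Inl (mset_set (inp M))"
  obtain W where W: "x = XP t + replicate_mset (cc t) (Inl p) + W"
    using t'(2) mpreN'[OF tt(2)] tt(1) by (metis mset_subset_eq_exists_conv)
  have y: "y = W + (YP t + replicate_mset (dd t) (Inl p))"
    using t'(3) W mpreN'[OF tt(2)] mpostN'[OF tt(2)] tt(1) by (simp only: add_diff_cancel_left')
  define fW where "fW = filter_mset (\<lambda>y. y \<noteq> Inl p) W"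
  have lx: "lam x = XP t + fW + repeat_mset (cc t + count W (Inl p)) IO"
    unfolding lam_def W fW_def IO_def using lam_XP by (simp add: lam_XP)
  have ly: "lam y = fW + YP t + repeat_mset (count W (Inl p) + dd t) IO"
    unfolding lam_def y fW_def IO_def using lam_XP by (simp add: lam_XP)
  have s1: "step (pc R) (lam x) (fW + repeat_mset (count W (Inl p)) IO + YP t + repeat_mset (dd t) II)"
    unfolding step_def enabled_def fire_def
  proof (intro bexI[of _ "Inl t"] conjI)
    show "Inl t \<in> trans (pc R)" using tt(2) transpcR by blast
    show "mset_set (pre (flow (pc R)) (Inl t)) \<subseteq># lam x"
      unfolding lx mpreR_N'[OF tt(2)] repeat_mset_distrib IO_def by (simp add: ac_simps)
    show "fW + repeat_mset (count W (Inl p)) IO + YP t + repeat_mset (dd t) II =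
        lam x - mset_set (pre (flow (pc R)) (Inl t)) + mset_set (post (flow (pc R)) (Inl t))"
      unfolding lx mpreR_N'[OF tt(2)] mpostR_N'[OF tt(2)] repeat_mset_distrib IO_def II_def by (simp add: ac_simps)
  qed
  have s2: "reach (pc R) (fW + repeat_mset (count W (Inl p)) IO + YP t + repeat_mset (dd t) II) (lam y)"
  proof (cases "dd t = 0")
    case True
    then show ?thesis unfolding ly by (simp add: reach_refl ac_simps)
  next
    case False
    then have d1: "dd t = 1" unfolding dd_def by (simp split: if_splits)
    define C where "C = fW + repeat_mset (count W (Inl p)) IO + YP t"
    have r: "reach (pc R) (II + C) (IO + C)"
      unfolding II_def IO_def by (rule liftM[OF IO])
    have e1: "fW + repeat_mset (count W (Inl p)) IO + YP t + repeat_mset (dd t) II = II + C"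
      unfolding C_def d1 by (simp add: add.commute)
    have e2: "lam y = IO + C" unfolding ly C_def d1 repeat_mset_distrib by (simp add: ac_simps)
    show ?thesis unfolding e1 e2 by (rule r)
  qed
  show ?thesis using reach_trans[OF reach_step[OF s1] s2] .
qed

lemma sim: "reach (pc N) x y \<Longrightarrow> reach (pc R) (lam x) (lam y)"
  unfolding reach_def[of "pc N"]
proof (induction rule: rtranclp_induct)
  case base then show ?case by (rule reach_refl)
next
  case (step y z) then show ?case using sim_step reach_trans by blast
qed


lemma sNr: "k' \<le> k \<Longrightarrow> set_mset m' \<subseteq> places (pc N) \<Longrightarrow>
   reach (pc N) (replicate_mset k (Inr True)) (m' + replicate_mset k' (Inr False)) \<Longrightarrow>
   reach (pc N) m' (replicate_mset (k - k') (Inr False))"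
  using sN unfolding sub_sound_t_def sub_sound_p_def pc_io by simp

lemma img_rep: "image_mset f (repeat_mset n X) = repeat_mset n (image_mset f X)" by (induction n) auto

lemma subsound_R: "sub_sound_t R"
  unfolding sub_sound_t_def sub_sound_p_def pc_io
proof (intro allI impI)
  fix k k' :: nat and m' :: "('a + bool) multiset"
  assume kk: "k' \<le> k" and sup: "set_mset m' \<subseteq> places (pc R)"
    and r: "reach (pc R) (repeat_mset k (mset_set {Inr True})) (m' + repeat_mset k' (mset_set {Inr False}))"
  have r': "reach (pc R) (replicate_mset k (Inr True)) (m' + replicate_mset k' (Inr False))" using r by simp
  obtain a b where H1: "reach M (repeat_mset a (mset_set (inp M))) (mu (m' + replicate_mset k' (Inr False)) + repeat_mset b (mset_set (outp M)))"
    and H2: "b \<le> a"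
    and H3: "reach (pc N) (replicate_mset k (Inr True)) (nu (m' + replicate_mset k' (Inr False)) + replicate_mset (a - b) (Inl p))"
    using inv[OF r'] by blast
  have H1': "reach M (repeat_mset a (mset_set (inp M))) (mu m' + repeat_mset b (mset_set (outp M)))" using H1 by simp
  have H3': "reach (pc N) (replicate_mset k (Inr True)) ((nu m' + replicate_mset (a - b) (Inl p)) + replicate_mset k' (Inr False))"
    using H3 by (simp add: ac_simps)
  have pl: "places (pc R) = Inl ` ((places N - {p}) \<union> places M) \<union> {Inr True, Inr False}"
    by (simp add: pc_places placesR)
  have nusub: "set_mset (nu m') \<subseteq> Inl ` (places N - {p}) \<union> {Inr True, Inr False}"
    using sup unfolding pl nu_def by auto
  have "set_mset (nu m' + replicate_mset (a - b) (Inl p)) \<subseteq> places (pc N)"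
    using nusub pP unfolding pc_places by auto
  then have A: "reach (pc N) (nu m' + replicate_mset (a - b) (Inl p)) (replicate_mset (k - k') (Inr False))"
    using sNr[OF kk _ H3'] by blast
  have B: "reach (pc R) (lam (nu m' + replicate_mset (a - b) (Inl p))) (lam (replicate_mset (k - k') (Inr False)))"
    using sim[OF A] .
  have np: "Inl p \<notin># nu m'" using nusub by auto
  have l1: "lam (nu m' + replicate_mset (a - b) (Inl p)) = nu m' + repeat_mset (a - b) (image_mset Inl (mset_set (outp M)))"
  proof -
    have f1: "filter_mset (\<lambda>y. y \<noteq> Inl p) (nu m') = nu m'" using np by (auto intro!: filter_all)
    have f2: "filter_mset (\<lambda>y. y \<noteq> Inl p) (replicate_mset n (Inl p)) = {#}" for n by (induction n) auto
    have c: "count (nu m') (Inl p) = 0" using np by (simp add: not_in_iff)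
    show ?thesis unfolding lam_def by (simp add: f1 f2 c)
  qed
  have l2: "lam (replicate_mset (k - k') (Inr False)) = replicate_mset (k - k') (Inr False)"
  proof -
    have "filter_mset (\<lambda>y. y \<noteq> Inl p) (replicate_mset n (Inr False)) = replicate_mset n (Inr False)" for n
      by (induction n) auto
    then show ?thesis unfolding lam_def by simp
  qed
  have C: "reach M (mu m') (repeat_mset (a - b) (mset_set (outp M)))"
    using sMr[OF H2 mu_set H1'] .
  have D: "reach (pc R) (image_mset Inl (mu m') + nu m') (image_mset Inl (repeat_mset (a - b) (mset_set (outp M))) + nu m')"
    using liftM[OF C] .
  have E: "reach (pc R) m' (nu m' + repeat_mset (a - b) (image_mset Inl (mset_set (outp M))))"
    using D unfolding img_rep by (metis decomp add.commute)
  show "reach (pc R) m' (repeat_mset (k - k') (mset_set {Inr False}))"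
    using reach_trans[OF E B[unfolded l1 l2]] by simp
qed


lemma fR1: "(x, y) \<in> flow N \<Longrightarrow> x \<noteq> p \<Longrightarrow> y \<noteq> p \<Longrightarrow> (x, y) \<in> flow R"
  unfolding subst_place_def by simp
lemma fR2: "(x, y) \<in> flow M \<Longrightarrow> (x, y) \<in> flow R"
  unfolding subst_place_def by simp
lemma fR3: "(x, p) \<in> flow N \<Longrightarrow> q \<in> inp M \<Longrightarrow> (x, q) \<in> flow R"
  unfolding subst_place_def pre_def by simp
lemma fR4: "(p, y) \<in> flow N \<Longrightarrow> q \<in> outp M \<Longrightarrow> (q, y) \<in> flow R"
  unfolding subst_place_def post_def by simp
lemma fRM: "(x, y) \<in> (flow M)\<^sup>* \<Longrightarrow> (x, y) \<in> (flow R)\<^sup>*"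
  using fR2 by (metis rtrancl_mono subrelI subsetD)

lemma Mpath: "q \<in> inp M \<Longrightarrow> \<exists>w\<in>outp M. (q, w) \<in> (flow R)\<^sup>*"
  using ioM(1,5) fRM unfolding wf_connected_def by blast
lemma Mpath2: "x \<in> places M \<union> trans M \<Longrightarrow> \<exists>q\<in>inp M. (q, x) \<in> (flow R)\<^sup>*"
  using ioM(5) fRM unfolding wf_connected_def by blast
lemma Mpath3: "x \<in> places M \<union> trans M \<Longrightarrow> \<exists>q\<in>outp M. (x, q) \<in> (flow R)\<^sup>*"
  using ioM(5) fRM unfolding wf_connected_def by blast

lemma claimA: "(y, x) \<in> (flow N)\<^sup>* \<Longrightarrow> y \<noteq> p \<Longrightarrow>
   (x \<noteq> p \<longrightarrow> (y, x) \<in> (flow R)\<^sup>*) \<and> (x = p \<longrightarrow> (\<forall>q\<in>inp M. (y, q) \<in> (flow R)\<^sup>*))"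
proof (induction rule: rtrancl_induct)
  case base then show ?case by simp
next
  case (step z x)
  show ?case
  proof (cases "z = p")
    case True
    then have IH: "\<forall>q\<in>inp M. (y, q) \<in> (flow R)\<^sup>*" using step by blast
    obtain q where q: "q \<in> inp M" using ioM(3) by blast
    obtain w where w: "w \<in> outp M" "(q, w) \<in> (flow R)\<^sup>*" using Mpath[OF q] by blast
    have yo: "(y, w) \<in> (flow R)\<^sup>*" using IH q w(2) by (meson rtrancl_trans)
    show ?thesis
    proof (cases "x = p")
      case True then show ?thesis using IH by simp
    next
      case False
      have "(w, x) \<in> flow R" using fR4 step.hyps(2) \<open>z = p\<close> w(1) by blast
      then show ?thesis using yo False by (meson rtrancl.rtrancl_into_rtrancl)
    qed
  next
    case False
    then have IH: "(y, z) \<in> (flow R)\<^sup>*" using step by blast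
    show ?thesis
    proof (cases "x = p")
      case True
      then show ?thesis using IH fR3 step.hyps(2) by (meson rtrancl.rtrancl_into_rtrancl)
    next
      case xF: False
      then show ?thesis using IH fR1[OF step.hyps(2) False xF] by (meson rtrancl.rtrancl_into_rtrancl)
    qed
  qed
qed

lemma claimB: "(x, y) \<in> (flow N)\<^sup>* \<Longrightarrow> y \<noteq> p \<Longrightarrow>
   (x \<noteq> p \<longrightarrow> (x, y) \<in> (flow R)\<^sup>*) \<and> (x = p \<longrightarrow> (\<forall>q\<in>outp M. (q, y) \<in> (flow R)\<^sup>*))"
proof (induction rule: converse_rtrancl_induct)
  case base then show ?case by simp
next
  case (step x z)
  show ?case
  proof (cases "z = p")
    case True
    then have IH: "\<forall>q\<in>outp M. (q, y) \<in> (flow R)\<^sup>*" using step by blast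
    show ?thesis
    proof (cases "x = p")
      case True then show ?thesis using IH by simp
    next
      case False
      obtain q where q: "q \<in> inp M" using ioM(3) by blast
      obtain w where w: "w \<in> outp M" "(q, w) \<in> (flow R)\<^sup>*" using Mpath[OF q] by blast
      have "(x, q) \<in> flow R" using fR3 step.hyps(1) \<open>z = p\<close> q by blast
      then have "(x, w) \<in> (flow R)\<^sup>*" using w(2) by (meson converse_rtrancl_into_rtrancl)
      then show ?thesis using IH w(1) False by (meson rtrancl_trans)
    qed
  next
    case False
    then have IH: "(z, y) \<in> (flow R)\<^sup>*" using step by blast
    show ?thesis
    proof (cases "x = p")
      case True
      then show ?thesis using IH fR4 step.hyps(1) by (meson converse_rtrancl_into_rtrancl)
    next
      case xF: False
      then show ?thesis using IH fR1[OF step.hyps(1) xF False] by (meson converse_rtrancl_into_rtrancl)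
    qed
  qed
qed

lemma conn_R: "wf_connected R"
  unfolding wf_connected_def ioR
proof (intro conjI ballI)
  fix x assume x: "x \<in> places R \<union> trans R"
  show "\<exists>i\<in>inp N. (i, x) \<in> (flow R)\<^sup>*"
  proof (cases "x \<in> places M \<union> trans M")
    case True
    obtain q where q: "q \<in> inp M" "(q, x) \<in> (flow R)\<^sup>*" using Mpath2[OF True] by blast
    obtain i where i: "i \<in> inp N" "(i, p) \<in> (flow N)\<^sup>*" using ioN(5) pP unfolding wf_connected_def by blast
    have "i \<noteq> p" using i(1) pfacts by blast
    then have "(i, q) \<in> (flow R)\<^sup>*" using claimA[OF i(2)] q(1) by blast
    then show ?thesis using i(1) q(2) by (meson rtrancl_trans)
  next
    case False
    then have xN: "x \<in> places N \<union> trans N" "x \<noteq> p" using x pfacts unfolding placesR transR by auto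
    obtain i where i: "i \<in> inp N" "(i, x) \<in> (flow N)\<^sup>*" using ioN(5) xN(1) unfolding wf_connected_def by blast
    have "i \<noteq> p" using i(1) pfacts by blast
    then show ?thesis using claimA[OF i(2)] xN(2) i(1) by blast
  qed
next
  fix x assume x: "x \<in> places R \<union> trans R"
  show "\<exists>q\<in>outp N. (x, q) \<in> (flow R)\<^sup>*"
  proof (cases "x \<in> places M \<union> trans M")
    case True
    obtain w where w: "w \<in> outp M" "(x, w) \<in> (flow R)\<^sup>*" using Mpath3[OF True] by blast
    obtain q where q: "q \<in> outp N" "(p, q) \<in> (flow N)\<^sup>*" using ioN(5) pP unfolding wf_connected_def by blast
    have "q \<noteq> p" using q(1) pfacts by blast
    then have "(w, q) \<in> (flow R)\<^sup>*" using claimB[OF q(2)] w(1) by blast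
    then show ?thesis using q(1) w(2) by (meson rtrancl_trans)
  next
    case False
    then have xN: "x \<in> places N \<union> trans N" "x \<noteq> p" using x pfacts unfolding placesR transR by auto
    obtain q where q: "q \<in> outp N" "(x, q) \<in> (flow N)\<^sup>*" using ioN(5) xN(1) unfolding wf_connected_def by blast
    have "q \<noteq> p" using q(1) pfacts by blast
    then show ?thesis using claimB[OF q(2)] xN(2) q(1) by blast
  qed
qed

lemma tWF_R: "tWF R"
  unfolding tWF_def petri_net_def
proof (intro conjI)
  show "finite (places R)" "finite (trans R)" using pnN pnM unfolding placesR transR by auto
  show "places R \<inter> trans R = {}" using pnN(3) pnM(3) disj unfolding placesR transR by auto
  show "inp R \<noteq> {}" "outp R \<noteq> {}" "inp R \<subseteq> trans R" "outp R \<subseteq> trans R"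
    using ioN unfolding ioR transR by auto
  show "wf_connected R" by (rule conn_R)
  have a: "pre (flow N) p \<subseteq> trans N" "post (flow N) p \<subseteq> trans N"
    using pnN(3,4) pP by (auto simp: pre_def post_def)
  show "flow R \<subseteq> places R \<times> trans R \<union> trans R \<times> places R"
    unfolding placesR transR using pnN(4) pnM(4) ioM(1,2) a
    by (auto simp: subst_place_def)
qed

end

theorem mainTheorem9:
  fixes N M :: "'a wfnet" and p :: 'a
  assumes "tWF N" and "sub_sound_t N"
    and "pWF M" and "sub_sound_p M"
    and "(places N \<union> trans N) \<inter> (places M \<union> trans M) = {}"
    and "p \<in> places N"
  shows "tWF (subst_place N p M) \<and> sub_sound_t (subst_place N p M)"
proof -
  interpret ctx N M p using assms by unfold_locales
  show ?thesis using tWF_R subsound_R by blast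
qed

end
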